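(* Let $(\Theta,\mathbf{Q},\leq)$ be a $\Theta$-projective system of size $t$ in an artin triangulated $R$-category $\mathcal{T}$, with triangles $K(i)\to Q(i)\xrightarrow{\beta_i}\Theta(i)\to K(i)[1]$. Then: (a) for each $i\in[1,t]$, $\beta_i:Q(i)\to\Theta(i)$ is a $\mathcal{P}(\Theta)$-cover of $\Theta(i)$; (b) if $(\Theta,\mathbf{Q}',\leq)$ is another $\Theta$-projective system of size $t$ in $\mathcal{T}$ with maps $\beta'_i:Q'(i)\to\Theta(i)$, then for each $i$ there is an isomorphism $\rho_i:Q(i)\to Q'(i)$ with $\beta'_i\rho_i=\beta_i$.
   Context: Artin triangulated $R$-category: triangulated, $R$ commutative artinian, Hom-sets finitely generated $R$-modules, $R$-bilinear composition, $R$-linear shift, Krull–Schmidt. $\mathfrak{F}(\mathcal{X})$: objects $M$ admitting distinguished triangles $M_{k-1}\to M_k\to X_k\to M_{k-1}[1]$ ($k=0,\dots,n$), $M_{-1}=0=X_0$, $M_n=M$, $X_k\in\mathcal{X}$ for $k\ge1$. A $\Theta$-projective system of size $t$: $\le$ a linear order on $[1,t]$; $\Theta(i)$ non-zero with $\mathrm{Hom}(\Theta(j),\Theta(i))=0$ for $j>i$; $Q(i)$ indecomposable with $Q=\bigoplus Q(i)$ satisfying $\mathrm{Hom}(Q,\Theta(j)[\pm1])=0$ for all $j$; for each $i$ a distinguished triangle $K(i)\to Q(i)\xrightarrow{\beta_i}\Theta(i)\to K(i)[1]$ with $K(i)\in\mathfrak{F}(\{\Theta(j):j>i\})$, $\mathrm{Hom}(K(i)[1],\Theta(i))=0$.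 $\mathcal{P}(\Theta)=\{X:\mathrm{Hom}(X,L[1])=0\ \forall L\in\mathfrak{F}(\Theta)\}$. A $\mathcal{P}(\Theta)$-cover of $C$ is a morphism $f:X\to C$ with $X\in\mathcal{P}(\Theta)$ such that every morphism $X'\to C$ with $X'\in\mathcal{P}(\Theta)$ factors through $f$, and $f$ is right minimal (any $g:X\to X$ with $fg=f$ is an isomorphism). *)

theory Defs
  imports Main
begin

text \<open>Objects are the elements of type 'o, morphisms are elements of type 'm
  (typed by the hom-sets), 'r is the commutative ground ring R.
  tri is the class of distinguished triangles (X,Y,Z,u,v,w) with
  u : X -> Y, v : Y -> Z, w : Z -> X[1].\<close>

record ('o, 'm, 'r) tricat =
  hom  :: "'o \<Rightarrow> 'o \<Rightarrow> 'm set"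
  comp :: "'m \<Rightarrow> 'm \<Rightarrow> 'm"       (* comp g f = g o f *)
  idm  :: "'o \<Rightarrow> 'm"
  add  :: "'m \<Rightarrow> 'm \<Rightarrow> 'm"
  zer  :: "'o \<Rightarrow> 'o \<Rightarrow> 'm"
  neg  :: "'m \<Rightarrow> 'm"
  smul :: "'r \<Rightarrow> 'm \<Rightarrow> 'm"
  shO  :: "'o \<Rightarrow> 'o"
  shM  :: "'m \<Rightarrow> 'm"
  tri  :: "('o \<times> 'o \<times> 'o \<times> 'm \<times> 'm \<times> 'm) set"

definition is_category :: "('o,'m,'r) tricat \<Rightarrow> bool" where
  "is_category C \<longleftrightarrow>
     (\<forall>X Y Z f g. f \<in> hom C X Y \<longrightarrow> g \<in> hom C Y Z \<longrightarrow> comp C g f \<in> hom C X Z) \<and>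
     (\<forall>X. idm C X \<in> hom C X X) \<and>
     (\<forall>X Y f. f \<in> hom C X Y \<longrightarrow> comp C f (idm C X) = f \<and> comp C (idm C Y) f = f) \<and>
     (\<forall>W X Y Z f g h. f \<in> hom C W X \<longrightarrow> g \<in> hom C X Y \<longrightarrow> h \<in> hom C Y Z \<longrightarrow>
        comp C h (comp C g f) = comp C (comp C h g) f)"

definition is_iso :: "('o,'m,'r) tricat \<Rightarrow> 'o \<Rightarrow> 'o \<Rightarrow> 'm \<Rightarrow> bool" where
  "is_iso C X Y f \<longleftrightarrow> f \<in> hom C X Y \<and>
     (\<exists>g \<in> hom C Y X. comp C g f = idm C X \<and> comp C f g = idm C Y)"

definition iso_obj :: "('o,'m,'r) tricat \<Rightarrow> 'o \<Rightarrow> 'o \<Rightarrow> bool" where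
  "iso_obj C X Y \<longleftrightarrow> (\<exists>f. is_iso C X Y f)"

definition is_R_linear :: "('o,'m,'r::comm_ring_1) tricat \<Rightarrow> bool" where
  "is_R_linear C \<longleftrightarrow>
     (\<forall>X Y. zer C X Y \<in> hom C X Y) \<and>
     (\<forall>X Y f g. f \<in> hom C X Y \<longrightarrow> g \<in> hom C X Y \<longrightarrow> add C f g \<in> hom C X Y) \<and>
     (\<forall>X Y f. f \<in> hom C X Y \<longrightarrow> neg C f \<in> hom C X Y) \<and>
     (\<forall>X Y f r. f \<in> hom C X Y \<longrightarrow> smul C r f \<in> hom C X Y) \<and>
     (\<forall>X Y f g h. f \<in> hom C X Y \<longrightarrow> g \<in> hom C X Y \<longrightarrow> h \<in> hom C X Y \<longrightarrow>
        add C (add C f g) h = add C f (add C g h)) \<and>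
     (\<forall>X Y f g. f \<in> hom C X Y \<longrightarrow> g \<in> hom C X Y \<longrightarrow> add C f g = add C g f) \<and>
     (\<forall>X Y f. f \<in> hom C X Y \<longrightarrow> add C (zer C X Y) f = f) \<and>
     (\<forall>X Y f. f \<in> hom C X Y \<longrightarrow> add C f (neg C f) = zer C X Y) \<and>
     (\<forall>X Y f r s. f \<in> hom C X Y \<longrightarrow> smul C (r + s) f = add C (smul C r f) (smul C s f)) \<and>
     (\<forall>X Y f g r. f \<in> hom C X Y \<longrightarrow> g \<in> hom C X Y \<longrightarrow>
        smul C r (add C f g) = add C (smul C r f) (smul C r g)) \<and>
     (\<forall>X Y f r s. f \<in> hom C X Y \<longrightarrow> smul C (r * s) f = smul C r (smul C s f)) \<and>
     (\<forall>X Y f. f \<in> hom C X Y \<longrightarrow> smul C 1 f = f) \<and>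
     (\<forall>X Y Z f f' g. f \<in> hom C X Y \<longrightarrow> f' \<in> hom C X Y \<longrightarrow> g \<in> hom C Y Z \<longrightarrow>
        comp C g (add C f f') = add C (comp C g f) (comp C g f')) \<and>
     (\<forall>X Y Z f g g'. f \<in> hom C X Y \<longrightarrow> g \<in> hom C Y Z \<longrightarrow> g' \<in> hom C Y Z \<longrightarrow>
        comp C (add C g g') f = add C (comp C g f) (comp C g' f)) \<and>
     (\<forall>X Y Z f g r. f \<in> hom C X Y \<longrightarrow> g \<in> hom C Y Z \<longrightarrow>
        comp C (smul C r g) f = smul C r (comp C g f) \<and>
        comp C g (smul C r f) = smul C r (comp C g f))"

inductive_set lin_span :: "('o,'m,'r) tricat \<Rightarrow> 'o \<Rightarrow> 'o \<Rightarrow> 'm set \<Rightarrow> 'm set"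
  for C X Y S where
  span_zero: "zer C X Y \<in> lin_span C X Y S"
| span_gen: "s \<in> S \<Longrightarrow> s \<in> lin_span C X Y S"
| span_add: "f \<in> lin_span C X Y S \<Longrightarrow> g \<in> lin_span C X Y S \<Longrightarrow> add C f g \<in> lin_span C X Y S"
| span_smul: "f \<in> lin_span C X Y S \<Longrightarrow> smul C r f \<in> lin_span C X Y S"

definition hom_fin_gen :: "('o,'m,'r) tricat \<Rightarrow> bool" where
  "hom_fin_gen C \<longleftrightarrow> (\<forall>X Y. \<exists>S. finite S \<and> S \<subseteq> hom C X Y \<and> hom C X Y \<subseteq> lin_span C X Y S)"

definition is_ideal_r :: "'r::comm_ring_1 set \<Rightarrow> bool" where
  "is_ideal_r I \<longleftrightarrow> 0 \<in> I \<and> (\<forall>a\<in>I. \<forall>b\<in>I. a + b \<in> I) \<and> (\<forall>a\<in>I. \<forall>r. r * a \<in> I)"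

definition artinian_ring :: "'r::comm_ring_1 itself \<Rightarrow> bool" where
  "artinian_ring _ \<longleftrightarrow> (\<forall>Is :: nat \<Rightarrow> 'r set.
     (\<forall>n. is_ideal_r (Is n)) \<and> (\<forall>n. Is (Suc n) \<subseteq> Is n) \<longrightarrow> (\<exists>N. \<forall>n\<ge>N. Is n = Is N))"

definition hom_zero :: "('o,'m,'r) tricat \<Rightarrow> 'o \<Rightarrow> 'o \<Rightarrow> bool" where
  "hom_zero C X Y \<longleftrightarrow> hom C X Y = {zer C X Y}"

definition is_zero_obj :: "('o,'m,'r) tricat \<Rightarrow> 'o \<Rightarrow> bool" where
  "is_zero_obj C Z \<longleftrightarrow> (\<forall>Y. hom_zero C Z Y \<and> hom_zero C Y Z)"

fun msum :: "('o,'m,'r) tricat \<Rightarrow> 'o \<Rightarrow> 'o \<Rightarrow> 'm list \<Rightarrow> 'm" where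
  "msum C X Y [] = zer C X Y"
| "msum C X Y (f # fs) = add C f (msum C X Y fs)"

definition is_biprod :: "('o,'m,'r) tricat \<Rightarrow> nat \<Rightarrow> (nat \<Rightarrow> 'o) \<Rightarrow> 'o \<Rightarrow>
    (nat \<Rightarrow> 'm) \<Rightarrow> (nat \<Rightarrow> 'm) \<Rightarrow> bool" where
  "is_biprod C n Xs M \<iota> \<pi> \<longleftrightarrow>
     (\<forall>k<n. \<iota> k \<in> hom C (Xs k) M \<and> \<pi> k \<in> hom C M (Xs k)) \<and>
     (\<forall>k<n. \<forall>l<n. comp C (\<pi> k) (\<iota> l) = (if k = l then idm C (Xs k) else zer C (Xs l) (Xs k))) \<and>
     msum C M M (map (\<lambda>k. comp C (\<iota> k) (\<pi> k)) [0..<n]) = idm C M"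

definition is_additive :: "('o,'m,'r) tricat \<Rightarrow> bool" where
  "is_additive C \<longleftrightarrow> (\<exists>Z. is_zero_obj C Z) \<and>
     (\<forall>A B. \<exists>M \<iota> \<pi>. is_biprod C 2 (\<lambda>k. if k = 0 then A else B) M \<iota> \<pi>)"

definition local_end :: "('o,'m,'r) tricat \<Rightarrow> 'o \<Rightarrow> bool" where
  "local_end C X \<longleftrightarrow> \<not> is_zero_obj C X \<and>
     (\<forall>f \<in> hom C X X. \<forall>g \<in> hom C X X. \<not> is_iso C X X f \<longrightarrow> \<not> is_iso C X X g \<longrightarrow>
        \<not> is_iso C X X (add C f g))"

definition krull_schmidt :: "('o,'m,'r) tricat \<Rightarrow> bool" where
  "krull_schmidt C \<longleftrightarrow> (\<forall>M. \<exists>n Xs \<iota> \<pi>. is_biprod C n Xs M \<iota> \<pi> \<and> (\<forall>k<n. local_end C (Xs k)))"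

definition indecomposable :: "('o,'m,'r) tricat \<Rightarrow> 'o \<Rightarrow> bool" where
  "indecomposable C X \<longleftrightarrow> \<not> is_zero_obj C X \<and>
     (\<forall>A B \<iota> \<pi>. is_biprod C 2 (\<lambda>k. if k = 0 then A else B) X \<iota> \<pi> \<longrightarrow>
        is_zero_obj C A \<or> is_zero_obj C B)"

definition is_shift :: "('o,'m,'r) tricat \<Rightarrow> bool" where
  "is_shift C \<longleftrightarrow>
     (\<forall>X Y f. f \<in> hom C X Y \<longrightarrow> shM C f \<in> hom C (shO C X) (shO C Y)) \<and>
     (\<forall>X Y Z f g. f \<in> hom C X Y \<longrightarrow> g \<in> hom C Y Z \<longrightarrow>
        shM C (comp C g f) = comp C (shM C g) (shM C f)) \<and>
     (\<forall>X. shM C (idm C X) = idm C (shO C X)) \<and>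
     (\<forall>X Y f g. f \<in> hom C X Y \<longrightarrow> g \<in> hom C X Y \<longrightarrow> shM C (add C f g) = add C (shM C f) (shM C g)) \<and>
     (\<forall>X Y f r. f \<in> hom C X Y \<longrightarrow> shM C (smul C r f) = smul C r (shM C f)) \<and>
     (\<forall>X Y. bij_betw (shM C) (hom C X Y) (hom C (shO C X) (shO C Y))) \<and>
     (\<forall>Y. \<exists>X. iso_obj C (shO C X) Y)"

definition is_triangulated :: "('o,'m,'r) tricat \<Rightarrow> bool" where
  "is_triangulated C \<longleftrightarrow>
     (\<forall>X Y Z u v w. (X,Y,Z,u,v,w) \<in> tri C \<longrightarrow>
        u \<in> hom C X Y \<and> v \<in> hom C Y Z \<and> w \<in> hom C Z (shO C X)) \<and>
     \<comment> \<open>TR1: closure under isomorphism of triangles\<close>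
     (\<forall>X Y Z u v w X' Y' Z' u' v' w' a b c. (X,Y,Z,u,v,w) \<in> tri C \<longrightarrow>
        u' \<in> hom C X' Y' \<longrightarrow> v' \<in> hom C Y' Z' \<longrightarrow> w' \<in> hom C Z' (shO C X') \<longrightarrow>
        is_iso C X X' a \<longrightarrow> is_iso C Y Y' b \<longrightarrow> is_iso C Z Z' c \<longrightarrow>
        comp C u' a = comp C b u \<longrightarrow> comp C v' b = comp C c v \<longrightarrow>
        comp C w' c = comp C (shM C a) w \<longrightarrow> (X',Y',Z',u',v',w') \<in> tri C) \<and>
     \<comment> \<open>TR1: X -> X -> 0 -> X[1]\<close>
     (\<forall>X Z. is_zero_obj C Z \<longrightarrow> (X,X,Z,idm C X, zer C X Z, zer C Z (shO C X)) \<in> tri C) \<and>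
     \<comment> \<open>TR1: every morphism embeds in a triangle\<close>
     (\<forall>X Y u. u \<in> hom C X Y \<longrightarrow> (\<exists>Z v w. (X,Y,Z,u,v,w) \<in> tri C)) \<and>
     \<comment> \<open>TR2: rotation\<close>
     (\<forall>X Y Z u v w. u \<in> hom C X Y \<longrightarrow> v \<in> hom C Y Z \<longrightarrow> w \<in> hom C Z (shO C X) \<longrightarrow>
        ((X,Y,Z,u,v,w) \<in> tri C \<longleftrightarrow> (Y,Z,shO C X,v,w,neg C (shM C u)) \<in> tri C)) \<and>
     \<comment> \<open>TR3: morphisms of triangles\<close>
     (\<forall>X Y Z u v w X' Y' Z' u' v' w' a b. (X,Y,Z,u,v,w) \<in> tri C \<longrightarrow>
        (X',Y',Z',u',v',w') \<in> tri C \<longrightarrow> a \<in> hom C X X' \<longrightarrow> b \<in> hom C Y Y' \<longrightarrow>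
        comp C u' a = comp C b u \<longrightarrow>
        (\<exists>c \<in> hom C Z Z'. comp C c v = comp C v' b \<and> comp C w' c = comp C (shM C a) w)) \<and>
     \<comment> \<open>TR4: octahedral axiom\<close>
     (\<forall>X Y Z f g Q1 p1 d1 Q2 p2 d2 Q3 p3 d3. f \<in> hom C X Y \<longrightarrow> g \<in> hom C Y Z \<longrightarrow>
        (X,Y,Q1,f,p1,d1) \<in> tri C \<longrightarrow> (X,Z,Q2,comp C g f,p2,d2) \<in> tri C \<longrightarrow>
        (Y,Z,Q3,g,p3,d3) \<in> tri C \<longrightarrow>
        (\<exists>a \<in> hom C Q1 Q2. \<exists>b \<in> hom C Q2 Q3.
           (Q1,Q2,Q3,a,b,comp C (shM C p1) d3) \<in> tri C \<and>
           comp C a p1 = comp C p2 g \<and> comp C d2 a = d1 \<and>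
           p3 = comp C b p2 \<and> comp C d3 b = comp C (shM C f) d2))"

definition artin_triangulated_category :: "('o,'m,'r::comm_ring_1) tricat \<Rightarrow> bool" where
  "artin_triangulated_category C \<longleftrightarrow>
     artinian_ring TYPE('r) \<and> is_category C \<and> is_R_linear C \<and> is_additive C \<and>
     hom_fin_gen C \<and> is_shift C \<and> is_triangulated C \<and> krull_schmidt C"

text \<open>M \<in> F(\<X>): Ms k plays the role of M_{k-1} (k = 0..n+1) and Xs k of X_k.\<close>

definition filt :: "('o,'m,'r) tricat \<Rightarrow> 'o set \<Rightarrow> 'o set" where
  "filt C \<X> = {M. \<exists>n Ms Xs. is_zero_obj C (Ms 0) \<and> is_zero_obj C (Xs 0) \<and> Ms (Suc n) = M \<and>
      (\<forall>k\<le>n. \<exists>u v w. (Ms k, Ms (Suc k), Xs k, u, v, w) \<in> tri C) \<and>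
      (\<forall>k\<in>{1..n}. Xs k \<in> \<X>)}"

definition P_class :: "('o,'m,'r) tricat \<Rightarrow> nat \<Rightarrow> (nat \<Rightarrow> 'o) \<Rightarrow> 'o set" where
  "P_class C t \<Theta> = {X. \<forall>L \<in> filt C (\<Theta> ` {1..t}). hom_zero C X (shO C L)}"

definition is_cover :: "('o,'m,'r) tricat \<Rightarrow> 'o set \<Rightarrow> 'o \<Rightarrow> 'o \<Rightarrow> 'm \<Rightarrow> bool" where
  "is_cover C \<P> X Y f \<longleftrightarrow> X \<in> \<P> \<and> f \<in> hom C X Y \<and>
     (\<forall>X' \<in> \<P>. \<forall>g \<in> hom C X' Y. \<exists>h \<in> hom C X' X. comp C f h = g) \<and>
     (\<forall>g \<in> hom C X X. comp C f g = f \<longrightarrow> is_iso C X X g)"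

definition proj_system :: "('o,'m,'r) tricat \<Rightarrow> nat \<Rightarrow> (nat \<Rightarrow> 'o) \<Rightarrow> (nat \<Rightarrow> 'o) \<Rightarrow>
    (nat \<times> nat) set \<Rightarrow> (nat \<Rightarrow> 'm) \<Rightarrow> bool" where
  "proj_system C t \<Theta> Q le \<beta> \<longleftrightarrow>
     linear_order_on {1..t} le \<and>
     (\<forall>i\<in>{1..t}. \<not> is_zero_obj C (\<Theta> i)) \<and>
     (\<forall>i\<in>{1..t}. \<forall>j\<in>{1..t}. (i,j) \<in> le \<and> i \<noteq> j \<longrightarrow> hom_zero C (\<Theta> j) (\<Theta> i)) \<and>
     (\<forall>i\<in>{1..t}. indecomposable C (Q i)) \<and>
     (\<exists>QQ \<iota> \<pi>. is_biprod C t (\<lambda>k. Q (Suc k)) QQ \<iota> \<pi> \<and>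
        (\<forall>j\<in>{1..t}. hom_zero C QQ (shO C (\<Theta> j)) \<and>
           (\<forall>Y. iso_obj C (shO C Y) (\<Theta> j) \<longrightarrow> hom_zero C QQ Y))) \<and>
     (\<forall>i\<in>{1..t}. \<exists>K a c. (K, Q i, \<Theta> i, a, \<beta> i, c) \<in> tri C \<and>
        K \<in> filt C (\<Theta> ` {j\<in>{1..t}. (i,j) \<in> le \<and> j \<noteq> i}) \<and>
        hom_zero C (shO C K) (\<Theta> i))"

end

theory Submission imports Defs begin

locale atc =
  fixes C :: "('o,'m,'r::comm_ring_1) tricat"
  assumes atc: "artin_triangulated_category C"
begin

lemma cat: "is_category C" using atc by (simp add: artin_triangulated_category_def)
lemma lin: "is_R_linear C" using atc by (simp add: artin_triangulated_category_def)
lemma shf: "is_shift C" using atc by (simp add: artin_triangulated_category_def)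
lemma trc: "is_triangulated C" using atc by (simp add: artin_triangulated_category_def)
lemma addv: "is_additive C" using atc by (simp add: artin_triangulated_category_def)
lemma ks: "krull_schmidt C" using atc by (simp add: artin_triangulated_category_def)

lemma hom_comp[intro]: "f \<in> hom C X Y \<Longrightarrow> g \<in> hom C Y Z \<Longrightarrow> comp C g f \<in> hom C X Z"
  using cat[unfolded is_category_def, THEN conjunct1] by blast
lemma idm_hom[simp,intro]: "idm C X \<in> hom C X X"
  using cat[unfolded is_category_def, THEN conjunct2, THEN conjunct1] by blast
lemma comp_idr[simp]: "f \<in> hom C X Y \<Longrightarrow> comp C f (idm C X) = f"
  using cat[unfolded is_category_def, THEN conjunct2, THEN conjunct2, THEN conjunct1] by blast
lemma comp_idl[simp]: "f \<in> hom C X Y \<Longrightarrow> comp C (idm C Y) f = f"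
  using cat[unfolded is_category_def, THEN conjunct2, THEN conjunct2, THEN conjunct1] by blast
lemma comp_assoc: "f \<in> hom C W X \<Longrightarrow> g \<in> hom C X Y \<Longrightarrow> h \<in> hom C Y Z \<Longrightarrow>
        comp C h (comp C g f) = comp C (comp C h g) f"
  using cat[unfolded is_category_def, THEN conjunct2, THEN conjunct2, THEN conjunct2] by blast

lemma zer_hom[simp,intro]: "zer C X Y \<in> hom C X Y"
  using lin[unfolded is_R_linear_def, THEN conjunct1] by blast
lemma add_hom[intro]: "f \<in> hom C X Y \<Longrightarrow> g \<in> hom C X Y \<Longrightarrow> add C f g \<in> hom C X Y"
  using lin[unfolded is_R_linear_def, THEN conjunct2, THEN conjunct1] by blast
lemma neg_hom[intro]: "f \<in> hom C X Y \<Longrightarrow> neg C f \<in> hom C X Y"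
  using lin[unfolded is_R_linear_def, THEN conjunct2, THEN conjunct2, THEN conjunct1] by blast
lemma add_assoc: "f \<in> hom C X Y \<Longrightarrow> g \<in> hom C X Y \<Longrightarrow> h \<in> hom C X Y \<Longrightarrow>
        add C (add C f g) h = add C f (add C g h)"
  using lin[unfolded is_R_linear_def, THEN conjunct2, THEN conjunct2, THEN conjunct2, THEN conjunct2, THEN conjunct1] by blast
lemma add_comm: "f \<in> hom C X Y \<Longrightarrow> g \<in> hom C X Y \<Longrightarrow> add C f g = add C g f"
  using lin[unfolded is_R_linear_def, THEN conjunct2, THEN conjunct2, THEN conjunct2, THEN conjunct2, THEN conjunct2, THEN conjunct1] by blast
lemma add_zl[simp]: "f \<in> hom C X Y \<Longrightarrow> add C (zer C X Y) f = f"
  using lin[unfolded is_R_linear_def, THEN conjunct2, THEN conjunct2, THEN conjunct2, THEN conjunct2, THEN conjunct2, THEN conjunct2, THEN conjunct1] by blast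
lemma add_neg[simp]: "f \<in> hom C X Y \<Longrightarrow> add C f (neg C f) = zer C X Y"
  using lin[unfolded is_R_linear_def, THEN conjunct2, THEN conjunct2, THEN conjunct2, THEN conjunct2, THEN conjunct2, THEN conjunct2, THEN conjunct2, THEN conjunct1] by blast
lemma comp_add_r: "f \<in> hom C X Y \<Longrightarrow> f' \<in> hom C X Y \<Longrightarrow> g \<in> hom C Y Z \<Longrightarrow>
        comp C g (add C f f') = add C (comp C g f) (comp C g f')"
  using lin[unfolded is_R_linear_def, THEN conjunct2, THEN conjunct2, THEN conjunct2, THEN conjunct2, THEN conjunct2, THEN conjunct2, THEN conjunct2, THEN conjunct2, THEN conjunct2, THEN conjunct2, THEN conjunct2, THEN conjunct2, THEN conjunct1] by blast
lemma comp_add_l: "f \<in> hom C X Y \<Longrightarrow> g \<in> hom C Y Z \<Longrightarrow> g' \<in> hom C Y Z \<Longrightarrow>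
        comp C (add C g g') f = add C (comp C g f) (comp C g' f)"
  using lin[unfolded is_R_linear_def, THEN conjunct2, THEN conjunct2, THEN conjunct2, THEN conjunct2, THEN conjunct2, THEN conjunct2, THEN conjunct2, THEN conjunct2, THEN conjunct2, THEN conjunct2, THEN conjunct2, THEN conjunct2, THEN conjunct2, THEN conjunct1] by blast

lemma shM_hom[intro]: "f \<in> hom C X Y \<Longrightarrow> shM C f \<in> hom C (shO C X) (shO C Y)"
  using shf[unfolded is_shift_def, THEN conjunct1] by blast
lemma shM_comp: "f \<in> hom C X Y \<Longrightarrow> g \<in> hom C Y Z \<Longrightarrow>
        shM C (comp C g f) = comp C (shM C g) (shM C f)"
  using shf[unfolded is_shift_def, THEN conjunct2, THEN conjunct1] by blast
lemma shM_idm[simp]: "shM C (idm C X) = idm C (shO C X)"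
  using shf[unfolded is_shift_def, THEN conjunct2, THEN conjunct2, THEN conjunct1] by blast
lemma shM_add: "f \<in> hom C X Y \<Longrightarrow> g \<in> hom C X Y \<Longrightarrow> shM C (add C f g) = add C (shM C f) (shM C g)"
  using shf[unfolded is_shift_def, THEN conjunct2, THEN conjunct2, THEN conjunct2, THEN conjunct1] by blast
lemma shM_bij: "bij_betw (shM C) (hom C X Y) (hom C (shO C X) (shO C Y))"
  using shf[unfolded is_shift_def, THEN conjunct2, THEN conjunct2, THEN conjunct2, THEN conjunct2, THEN conjunct2, THEN conjunct1] by blast

lemma tri_homs: "(X,Y,Z,u,v,w) \<in> tri C \<Longrightarrow> u \<in> hom C X Y \<and> v \<in> hom C Y Z \<and> w \<in> hom C Z (shO C X)"
  using trc[unfolded is_triangulated_def, THEN conjunct1] by blast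
lemma tri_zero: "is_zero_obj C Z \<Longrightarrow> (X,X,Z,idm C X, zer C X Z, zer C Z (shO C X)) \<in> tri C"
  using trc[unfolded is_triangulated_def, THEN conjunct2, THEN conjunct2, THEN conjunct1] by blast
lemma tri_ex: "u \<in> hom C X Y \<Longrightarrow> \<exists>Z v w. (X,Y,Z,u,v,w) \<in> tri C"
  using trc[unfolded is_triangulated_def, THEN conjunct2, THEN conjunct2, THEN conjunct2, THEN conjunct1] by blast
lemma tri_rot_iff: "u \<in> hom C X Y \<Longrightarrow> v \<in> hom C Y Z \<Longrightarrow> w \<in> hom C Z (shO C X) \<Longrightarrow>
        ((X,Y,Z,u,v,w) \<in> tri C \<longleftrightarrow> (Y,Z,shO C X,v,w,neg C (shM C u)) \<in> tri C)"
  by (rule trc[unfolded is_triangulated_def, THEN conjunct2, THEN conjunct2, THEN conjunct2, THEN conjunct2, THEN conjunct1, rule_format])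
lemma tri_rot: assumes "(X,Y,Z,u,v,w) \<in> tri C" shows "(Y,Z,shO C X,v,w,neg C (shM C u)) \<in> tri C"
proof -
  have h: "u \<in> hom C X Y" "v \<in> hom C Y Z" "w \<in> hom C Z (shO C X)" using tri_homs[OF assms] by auto
  show ?thesis using tri_rot_iff[OF h] assms by simp
qed
lemma TR3: "(X,Y,Z,u,v,w) \<in> tri C \<Longrightarrow>
        (X',Y',Z',u',v',w') \<in> tri C \<Longrightarrow> a \<in> hom C X X' \<Longrightarrow> b \<in> hom C Y Y' \<Longrightarrow>
        comp C u' a = comp C b u \<Longrightarrow>
        (\<exists>c \<in> hom C Z Z'. comp C c v = comp C v' b \<and> comp C w' c = comp C (shM C a) w)"
  using trc[unfolded is_triangulated_def, THEN conjunct2, THEN conjunct2, THEN conjunct2, THEN conjunct2, THEN conjunct2, THEN conjunct1] by blast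
lemma zero_ex: "\<exists>Z. is_zero_obj C Z" using addv by (simp add: is_additive_def)

lemma add_zr[simp]: "f \<in> hom C X Y \<Longrightarrow> add C f (zer C X Y) = f"
  using add_comm[OF zer_hom, of f X Y] by simp
lemma add_negl[simp]: "f \<in> hom C X Y \<Longrightarrow> add C (neg C f) f = zer C X Y"
  using add_comm[OF neg_hom, of f X Y f] by simp
lemma neg_unique: assumes "f \<in> hom C X Y" "g \<in> hom C X Y" "add C f g = zer C X Y"
  shows "g = neg C f"
proof -
  have "neg C f = add C (neg C f) (add C f g)" using assms by (simp add: neg_hom)
  also have "\<dots> = add C (add C (neg C f) f) g" using add_assoc[OF neg_hom[OF assms(1)] assms(1) assms(2)] by simp
  also have "\<dots> = g" using assms by simp
  finally show ?thesis by simp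
qed
lemma neg_neg[simp]: "f \<in> hom C X Y \<Longrightarrow> neg C (neg C f) = f"
  using neg_unique[of "neg C f" X Y f] by (simp add: neg_hom)
lemma add_cancel: assumes "f \<in> hom C X Y" "g \<in> hom C X Y" "h \<in> hom C X Y" "add C f g = add C f h"
  shows "g = h"
proof -
  have "g = add C (add C (neg C f) f) g" using assms by simp
  also have "\<dots> = add C (neg C f) (add C f g)" using add_assoc[OF neg_hom[OF assms(1)] assms(1) assms(2)] .
  also have "\<dots> = add C (neg C f) (add C f h)" using assms(4) by simp
  also have "\<dots> = add C (add C (neg C f) f) h" using add_assoc[OF neg_hom[OF assms(1)] assms(1) assms(3)] by simp
  also have "\<dots> = h" using assms by simp
  finally show ?thesis .
qed
lemma sub_zero: assumes "f \<in> hom C X Y" "g \<in> hom C X Y" "add C f (neg C g) = zer C X Y"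
  shows "f = g"
proof -
  have "neg C g = neg C f" using neg_unique[OF assms(1) neg_hom[OF assms(2)] assms(3)] .
  hence "neg C (neg C g) = neg C (neg C f)" by simp
  thus ?thesis using assms by simp
qed
lemma comp_zl: assumes "f \<in> hom C X Y" shows "comp C (zer C Y Z) f = zer C X Z"
proof -
  let ?x = "comp C (zer C Y Z) f"
  have x: "?x \<in> hom C X Z" using assms by blast
  have "add C ?x ?x = comp C (add C (zer C Y Z) (zer C Y Z)) f"
    using comp_add_l[OF assms zer_hom zer_hom] by simp
  also have "\<dots> = add C ?x (zer C X Z)" using x by simp
  finally show ?thesis using add_cancel[OF x x zer_hom] by simp
qed
lemma comp_zr: assumes "g \<in> hom C Y Z" shows "comp C g (zer C X Y) = zer C X Z"
proof -
  let ?x = "comp C g (zer C X Y)"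
  have x: "?x \<in> hom C X Z" using assms by blast
  have "add C ?x ?x = comp C g (add C (zer C X Y) (zer C X Y))"
    using comp_add_r[OF zer_hom zer_hom assms] by simp
  also have "\<dots> = add C ?x (zer C X Z)" using x by simp
  finally show ?thesis using add_cancel[OF x x zer_hom] by simp
qed
lemma comp_negl: assumes "f \<in> hom C X Y" "g \<in> hom C Y Z"
  shows "comp C (neg C g) f = neg C (comp C g f)"
proof -
  have "add C (comp C g f) (comp C (neg C g) f) = comp C (add C g (neg C g)) f"
    using comp_add_l[OF assms(1) assms(2) neg_hom[OF assms(2)]] by simp
  also have "\<dots> = zer C X Z" using assms comp_zl[OF assms(1), of Z] by simp
  finally show ?thesis using neg_unique[OF hom_comp[OF assms] hom_comp[OF assms(1) neg_hom[OF assms(2)]]] by simp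
qed
lemma comp_negr: assumes "f \<in> hom C X Y" "g \<in> hom C Y Z"
  shows "comp C g (neg C f) = neg C (comp C g f)"
proof -
  have "add C (comp C g f) (comp C g (neg C f)) = comp C g (add C f (neg C f))"
    using comp_add_r[OF assms(1) neg_hom[OF assms(1)] assms(2)] by simp
  also have "\<dots> = zer C X Z" using assms comp_zr[OF assms(2), of X] by simp
  finally show ?thesis using neg_unique[OF hom_comp[OF assms] hom_comp[OF neg_hom[OF assms(1)] assms(2)]] by simp
qed
lemma neg_zer[simp]: "neg C (zer C X Y) = zer C X Y"
  using neg_unique[of "zer C X Y" X Y "zer C X Y"] by simp
lemma shM_zer[simp]: "shM C (zer C X Y) = zer C (shO C X) (shO C Y)"
proof -
  let ?x = "shM C (zer C X Y)"
  have x: "?x \<in> hom C (shO C X) (shO C Y)" by blast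
  have e: "shM C (add C (zer C X Y) (zer C X Y)) = add C ?x ?x"
    using shM_add[OF zer_hom zer_hom, of X Y] .
  have "add C ?x ?x = add C ?x (zer C (shO C X) (shO C Y))"
  proof -
    have z: "add C (zer C X Y) (zer C X Y) = zer C X Y" by (rule add_zl[OF zer_hom])
    show ?thesis by (subst add_zr[OF x]) (rule e[unfolded z, symmetric])
  qed
  thus ?thesis by (rule add_cancel[OF x x zer_hom])
qed

lemma zero_homL: "is_zero_obj C Z \<Longrightarrow> f \<in> hom C Z Y \<Longrightarrow> f = zer C Z Y"
  unfolding is_zero_obj_def hom_zero_def by blast
lemma zero_homR: "is_zero_obj C Z \<Longrightarrow> f \<in> hom C Y Z \<Longrightarrow> f = zer C Y Z"
  unfolding is_zero_obj_def hom_zero_def by blast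
lemma hom_zeroD: "hom_zero C X Y \<Longrightarrow> f \<in> hom C X Y \<Longrightarrow> f = zer C X Y"
  unfolding hom_zero_def by blast
lemma hom_zeroI: "(\<And>f. f \<in> hom C X Y \<Longrightarrow> f = zer C X Y) \<Longrightarrow> hom_zero C X Y"
  unfolding hom_zero_def using zer_hom by blast

lemma idm_zero: assumes "idm C X = zer C X X" shows "is_zero_obj C X"
  unfolding is_zero_obj_def
proof (intro allI conjI hom_zeroI)
  fix Y f assume f: "f \<in> hom C X Y"
  have "f = comp C f (idm C X)" using f by simp
  also have "\<dots> = zer C X Y" using assms comp_zr[OF f, of X] by simp
  finally show "f = zer C X Y" .
next
  fix Y f assume f: "f \<in> hom C Y X"
  have "f = comp C (idm C X) f" using f by simp
  also have "\<dots> = zer C Y X" using assms comp_zl[OF f, of X] by simp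
  finally show "f = zer C Y X" .
qed

lemma zero_shift: assumes "is_zero_obj C Z" shows "is_zero_obj C (shO C Z)"
proof -
  have "idm C (shO C Z) \<in> shM C ` hom C Z Z"
    using shM_bij[of Z Z] idm_hom unfolding bij_betw_def by simp
  then obtain f where f: "f \<in> hom C Z Z" "idm C (shO C Z) = shM C f" by blast
  have "f = zer C Z Z" using zero_homL[OF assms f(1)] .
  hence "idm C (shO C Z) = zer C (shO C Z) (shO C Z)" using f by simp
  thus ?thesis by (rule idm_zero)
qed

lemma zero_triangle: assumes "is_zero_obj C Z"
  shows "(X,X,Z,idm C X, zer C X Z, zer C Z (shO C X)) \<in> tri C"
  using tri_zero[OF assms] .

lemma comp_tri_zero: assumes T: "(A,B,D,u,v,w) \<in> tri C" shows "comp C v u = zer C A D"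
proof -
  obtain Z where Z: "is_zero_obj C Z" using zero_ex by blast
  have h: "u \<in> hom C A B" "v \<in> hom C B D" "w \<in> hom C D (shO C A)" using tri_homs[OF T] by auto
  obtain c where c: "c \<in> hom C Z D" "comp C c (zer C A Z) = comp C v u"
    using TR3[OF tri_zero[OF Z, of A] T idm_hom h(1)] h by auto
  show ?thesis using c comp_zr[OF c(1), of A] by simp
qed

lemma exact_cov: assumes T: "(A,B,D,u,v,w) \<in> tri C" and g: "g \<in> hom C W B"
  and z: "comp C v g = zer C W D"
  shows "\<exists>h\<in>hom C W A. comp C u h = g"
proof -
  obtain Z where Z: "is_zero_obj C Z" using zero_ex by blast
  have h: "u \<in> hom C A B" "v \<in> hom C B D" "w \<in> hom C D (shO C A)" using tri_homs[OF T] by auto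
  have T0: "(W, Z, shO C W, zer C W Z, zer C Z (shO C W), neg C (shM C (idm C W))) \<in> tri C"
    using tri_rot[OF tri_zero[OF Z, of W]] .
  have T1: "(B, D, shO C A, v, w, neg C (shM C u)) \<in> tri C" using tri_rot[OF T] .
  have cc: "comp C v g = comp C (zer C Z D) (zer C W Z)" unfolding z comp_zl[OF zer_hom[of W Z], of D] ..
  obtain c where c: "c \<in> hom C (shO C W) (shO C A)"
     "comp C (neg C (shM C u)) c = comp C (shM C g) (neg C (shM C (idm C W)))"
    using TR3[OF T0 T1 g zer_hom cc] by blast
  have su: "shM C u \<in> hom C (shO C A) (shO C B)" using h by blast
  have sg: "shM C g \<in> hom C (shO C W) (shO C B)" using g by blast
  have "neg C (comp C (shM C u) c) = neg C (shM C g)"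
    using c comp_negl[OF c(1) su] comp_negr[OF idm_hom sg] sg by simp
  hence e: "comp C (shM C u) c = shM C g"
    using neg_neg[OF sg] neg_neg[OF hom_comp[OF c(1) su]] by metis
  obtain k where k: "k \<in> hom C W A" "c = shM C k"
    using c(1) shM_bij[of W A] unfolding bij_betw_def by auto
  have "shM C (comp C u k) = shM C g" using e k shM_comp[OF k(1) h(1)] by simp
  moreover have "comp C u k \<in> hom C W B" using k h by blast
  ultimately have "comp C u k = g" using shM_bij[of W B] g unfolding bij_betw_def inj_on_def by blast
  thus ?thesis using k by blast
qed

lemma exact_contra: assumes T: "(A,B,D,u,v,w) \<in> tri C" and f: "f \<in> hom C B W"
  and z: "comp C f u = zer C A W"
  shows "\<exists>h\<in>hom C D W. comp C h v = f"
proof -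
  obtain Z where Z: "is_zero_obj C Z" using zero_ex by blast
  have Z1: "is_zero_obj C (shO C Z)" using zero_shift[OF Z] .
  have h: "u \<in> hom C A B" "v \<in> hom C B D" "w \<in> hom C D (shO C A)" using tri_homs[OF T] by auto
  have nz: "neg C (shM C (zer C Z W)) = zer C (shO C Z) (shO C W)" by simp
  have "(W, W, shO C Z, idm C W, zer C W (shO C Z), neg C (shM C (zer C Z W))) \<in> tri C"
    unfolding nz using tri_zero[OF Z1, of W] .
  hence T0: "(Z, W, W, zer C Z W, idm C W, zer C W (shO C Z)) \<in> tri C"
    using tri_rot_iff[OF zer_hom idm_hom zer_hom] by blast
  have cc: "comp C (zer C Z W) (zer C A Z) = comp C f u" unfolding z comp_zl[OF zer_hom[of A Z], of W] ..
  obtain c where c: "c \<in> hom C D W" "comp C c v = comp C (idm C W) f"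
    using TR3[OF T T0 zer_hom f cc] by blast
  thus ?thesis using f by auto
qed

lemma mid_zero: assumes T: "(A,B,D,u,v,w) \<in> tri C" and "hom_zero C W A" "hom_zero C W D"
  shows "hom_zero C W B"
proof (rule hom_zeroI)
  fix g assume g: "g \<in> hom C W B"
  have h: "u \<in> hom C A B" "v \<in> hom C B D" "w \<in> hom C D (shO C A)" using tri_homs[OF T] by auto
  have "comp C v g = zer C W D" using hom_zeroD[OF assms(3)] g h by blast
  then obtain k where k: "k \<in> hom C W A" "comp C u k = g" using exact_cov[OF T g] by blast
  have "k = zer C W A" using hom_zeroD[OF assms(2) k(1)] .
  thus "g = zer C W B" using k h comp_zr[OF h(1), of W] by simp
qed

lemma zero_obj_hz: "is_zero_obj C Z \<Longrightarrow> hom_zero C W Z"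
  unfolding is_zero_obj_def by blast

lemma filt_mono: "X \<subseteq> Y \<Longrightarrow> filt C X \<subseteq> filt C Y"
  unfolding filt_def by blast

lemma filt_homzero: assumes H: "\<forall>X\<in>XX. hom_zero C W (shO C X)" and L: "L \<in> filt C XX"
  shows "hom_zero C W (shO C L)"
proof -
  obtain n Ms Xs where F: "is_zero_obj C (Ms 0)" "is_zero_obj C (Xs 0)" "Ms (Suc n) = L"
      "\<forall>k\<le>n. \<exists>u v w. (Ms k, Ms (Suc k), Xs k, u, v, w) \<in> tri C"
      "\<forall>k\<in>{1..n}. Xs k \<in> XX"
    using L unfolding filt_def by blast
  have "k \<le> Suc n \<Longrightarrow> hom_zero C W (shO C (Ms k))" for k
  proof (induction k)
    case 0 then show ?case using zero_obj_hz[OF zero_shift[OF F(1)]] by blast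
  next
    case (Suc k)
    then have kn: "k \<le> n" by simp
    then obtain u v w where T: "(Ms k, Ms (Suc k), Xs k, u, v, w) \<in> tri C" using F(4) by blast
    have hx: "hom_zero C W (shO C (Xs k))"
    proof (cases "k = 0")
      case True then show ?thesis using zero_obj_hz[OF zero_shift[OF F(2)]] by simp
    next
      case False then show ?thesis using H F(5) kn by auto
    qed
    show ?case using mid_zero[OF tri_rot[OF tri_rot[OF tri_rot[OF T]]] Suc.IH hx] Suc.prems by simp
  qed
  thus ?thesis using F(3) by (metis le_refl)
qed

lemma biprod_summand_hz: assumes B: "is_biprod C t (\<lambda>k. Q (Suc k)) QQ \<iota> \<pi>" and i: "i \<in> {1..t}"
  and hz: "hom_zero C QQ Y" shows "hom_zero C (Q i) Y"
proof (rule hom_zeroI)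
  fix f assume f: "f \<in> hom C (Q i) Y"
  define k where "k = i - 1"
  have k: "k < t" "Suc k = i" using i unfolding k_def by auto
  have io: "\<iota> k \<in> hom C (Q i) QQ" "\<pi> k \<in> hom C QQ (Q i)" "comp C (\<pi> k) (\<iota> k) = idm C (Q i)"
    using B k unfolding is_biprod_def by auto
  have "f = comp C f (comp C (\<pi> k) (\<iota> k))" using io f by simp
  also have "\<dots> = comp C (comp C f (\<pi> k)) (\<iota> k)" using comp_assoc[OF io(1) io(2) f] .
  also have "comp C f (\<pi> k) = zer C QQ Y" using hom_zeroD[OF hz] io f by blast
  finally show "f = zer C (Q i) Y" using comp_zl[OF io(1)] by simp
qed

lemma iso_comp: assumes a: "is_iso C X Y a" and b: "is_iso C Y Z b" shows "is_iso C X Z (comp C b a)"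
proof -
  obtain a' where a': "a \<in> hom C X Y" "a' \<in> hom C Y X" "comp C a' a = idm C X" "comp C a a' = idm C Y"
    using a unfolding is_iso_def by blast
  obtain b' where b': "b \<in> hom C Y Z" "b' \<in> hom C Z Y" "comp C b' b = idm C Y" "comp C b b' = idm C Z"
    using b unfolding is_iso_def by blast
  have ba: "comp C b a \<in> hom C X Z" using a' b' by blast
  have ab': "comp C a' b' \<in> hom C Z X" using a' b' by blast
  have "comp C (comp C a' b') (comp C b a) = comp C a' (comp C b' (comp C b a))"
    using comp_assoc[OF ba b'(2) a'(2)] by simp
  also have "comp C b' (comp C b a) = a" using comp_assoc[OF a'(1) b'(1) b'(2)] b'(3) a'(1) by simp
  finally have 1: "comp C (comp C a' b') (comp C b a) = idm C X" using a'(3) by simp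
  have "comp C (comp C b a) (comp C a' b') = comp C b (comp C a (comp C a' b'))"
    using comp_assoc[OF ab' a'(1) b'(1)] by simp
  also have "comp C a (comp C a' b') = b'" using comp_assoc[OF b'(2) a'(2) a'(1)] a'(4) b'(2) by simp
  finally have 2: "comp C (comp C b a) (comp C a' b') = idm C Z" using b'(4) by simp
  show ?thesis unfolding is_iso_def using ba ab' 1 2 by blast
qed

lemma iso_idm: "is_iso C X X (idm C X)"
  unfolding is_iso_def using comp_idl[OF idm_hom[of X]] by blast

lemma conj_iso: assumes ph: "\<phi> \<in> hom C M X0" "\<psi> \<in> hom C X0 M" "comp C \<phi> \<psi> = idm C X0"
    "comp C \<psi> \<phi> = idm C M" and x: "x \<in> hom C M M"
  and i: "is_iso C X0 X0 (comp C \<phi> (comp C x \<psi>))"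
  shows "is_iso C M M x"
proof -
  let ?x = "comp C \<phi> (comp C x \<psi>)"
  have xp: "comp C x \<psi> \<in> hom C X0 M" using x ph by blast
  have "comp C ?x \<phi> = comp C \<phi> (comp C (comp C x \<psi>) \<phi>)" using comp_assoc[OF ph(1) xp ph(1)] by simp
  also have "comp C (comp C x \<psi>) \<phi> = comp C x (comp C \<psi> \<phi>)" using comp_assoc[OF ph(1) ph(2) x] by simp
  finally have e1: "comp C ?x \<phi> = comp C \<phi> x" using ph x by simp
  have "comp C \<psi> (comp C \<phi> x) = x" using comp_assoc[OF x ph(1) ph(2)] ph x by simp
  hence e2: "x = comp C \<psi> (comp C ?x \<phi>)" using e1 by simp
  have ip: "is_iso C M X0 \<phi>" unfolding is_iso_def using ph by blast
  have is': "is_iso C X0 M \<psi>" unfolding is_iso_def using ph by blast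
  show ?thesis using e2 iso_comp[OF iso_comp[OF ip i] is'] by simp
qed

lemma local_transfer: assumes L: "local_end C X0" and ph: "\<phi> \<in> hom C M X0" "\<psi> \<in> hom C X0 M"
    "comp C \<phi> \<psi> = idm C X0" "comp C \<psi> \<phi> = idm C M"
  and g: "g \<in> hom C M M" and ng: "\<not> is_iso C M M g"
  shows "is_iso C M M (add C (idm C M) (neg C g))"
proof (rule ccontr)
  assume ne: "\<not> is_iso C M M (add C (idm C M) (neg C g))"
  let ?g = "comp C \<phi> (comp C g \<psi>)"
  have gh: "?g \<in> hom C X0 X0" using ph g by blast
  have gp: "comp C g \<psi> \<in> hom C X0 M" using ph g by blast
  have "comp C (add C (idm C M) (neg C g)) \<psi> = add C \<psi> (neg C (comp C g \<psi>))"
    using comp_add_l[OF ph(2) idm_hom neg_hom[OF g]] comp_negl[OF ph(2) g] ph by simp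
  hence "comp C \<phi> (comp C (add C (idm C M) (neg C g)) \<psi>) = add C (idm C X0) (neg C ?g)"
    using comp_add_r[OF ph(2) neg_hom[OF gp] ph(1)] comp_negr[OF gp ph(1)] ph by simp
  hence n2: "\<not> is_iso C X0 X0 (add C (idm C X0) (neg C ?g))"
    using conj_iso[OF ph add_hom[OF idm_hom neg_hom[OF g]]] ne by metis
  have n1: "\<not> is_iso C X0 X0 ?g" using conj_iso[OF ph g] ng by blast
  have "\<not> is_iso C X0 X0 (add C ?g (add C (idm C X0) (neg C ?g)))"
    using L n1 n2 gh add_hom[OF idm_hom neg_hom[OF gh]] unfolding local_end_def by blast
  moreover have "add C ?g (add C (idm C X0) (neg C ?g)) = idm C X0"
  proof -
    have "add C ?g (add C (idm C X0) (neg C ?g)) = add C ?g (add C (neg C ?g) (idm C X0))"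
      using add_comm[OF idm_hom neg_hom[OF gh]] by simp
    also have "\<dots> = add C (add C ?g (neg C ?g)) (idm C X0)"
      using add_assoc[OF gh neg_hom[OF gh] idm_hom] by simp
    finally show ?thesis using gh by simp
  qed
  ultimately show False using iso_idm by simp
qed

lemma indec_local: assumes ind: "indecomposable C M"
  shows "\<exists>X0 \<phi> \<psi>. local_end C X0 \<and> \<phi> \<in> hom C M X0 \<and> \<psi> \<in> hom C X0 M \<and>
           comp C \<phi> \<psi> = idm C X0 \<and> comp C \<psi> \<phi> = idm C M"
proof -
  obtain n Xs \<iota> \<pi> where B: "is_biprod C n Xs M \<iota> \<pi>" and Lk: "\<forall>k<n. local_end C (Xs k)"
    using ks unfolding krull_schmidt_def by blast
  have nz: "\<not> is_zero_obj C M" using ind unfolding indecomposable_def by blast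
  have n0: "n \<noteq> 0"
  proof
    assume "n = 0"
    hence "idm C M = zer C M M" using B unfolding is_biprod_def by simp
    thus False using idm_zero nz by blast
  qed
  define X0 where "X0 = Xs 0"
  define i0 where "i0 = \<iota> 0"
  define p0 where "p0 = \<pi> 0"
  have i0: "i0 \<in> hom C X0 M" and p0: "p0 \<in> hom C M X0" and pi: "comp C p0 i0 = idm C X0"
    using B n0 unfolding is_biprod_def X0_def i0_def p0_def by auto
  have LX: "local_end C X0" using Lk n0 unfolding X0_def by simp
  obtain B' v w where T: "(X0, M, B', i0, v, w) \<in> tri C" using tri_ex[OF i0] by blast
  have v: "v \<in> hom C M B'" and w: "w \<in> hom C B' (shO C X0)" using tri_homs[OF T] by auto
  define e where "e = comp C i0 p0"
  have e: "e \<in> hom C M M" unfolding e_def using i0 p0 by blast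
  define f where "f = add C (idm C M) (neg C e)"
  have f: "f \<in> hom C M M" unfolding f_def using e by blast
  have ei0: "comp C e i0 = i0" unfolding e_def using comp_assoc[OF i0 p0 i0] pi i0 by simp
  have pe: "comp C p0 e = p0" unfolding e_def using comp_assoc[OF p0 i0 p0] pi p0 by simp
  have vi0: "comp C v i0 = zer C X0 B'" using comp_tri_zero[OF T] .
  have fi0: "comp C f i0 = zer C X0 M"
    unfolding f_def using comp_add_l[OF i0 idm_hom neg_hom[OF e]] comp_negl[OF i0 e] ei0 i0 by simp
  obtain s where s: "s \<in> hom C B' M" "comp C s v = f" using exact_contra[OF T f fi0] by blast
  have T2: "(B', shO C X0, shO C M, w, neg C (shM C i0), neg C (shM C v)) \<in> tri C"
    using tri_rot[OF tri_rot[OF T]] .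
  have si0: "shM C i0 \<in> hom C (shO C X0) (shO C M)" using i0 by blast
  have sp0: "shM C p0 \<in> hom C (shO C M) (shO C X0)" using p0 by blast
  have "neg C (comp C (shM C i0) w) = zer C B' (shO C M)"
    using comp_tri_zero[OF T2] comp_negl[OF w si0] by simp
  hence "neg C (neg C (comp C (shM C i0) w)) = zer C B' (shO C M)" by simp
  hence iw: "comp C (shM C i0) w = zer C B' (shO C M)" using neg_neg[OF hom_comp[OF w si0]] by simp
  have "w = comp C (shM C (comp C p0 i0)) w" using pi w by simp
  also have "\<dots> = comp C (comp C (shM C p0) (shM C i0)) w" using shM_comp[OF i0 p0] by simp
  also have "\<dots> = comp C (shM C p0) (comp C (shM C i0) w)" using comp_assoc[OF w si0 sp0] by simp
  finally have w0: "w = zer C B' (shO C X0)" using iw comp_zr[OF sp0, of B'] by simp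
  have T1: "(M, B', shO C X0, v, w, neg C (shM C i0)) \<in> tri C" using tri_rot[OF T] .
  have cancel: "x = zer C B' W" if x: "x \<in> hom C B' W" and xv: "comp C x v = zer C M W" for x W
  proof -
    obtain h where h: "h \<in> hom C (shO C X0) W" "comp C h w = x" using exact_contra[OF T1 x xv] by blast
    thus ?thesis using w0 comp_zr[OF h(1), of B'] by simp
  qed
  have ps: "comp C p0 s = zer C B' X0"
  proof (rule cancel)
    show "comp C p0 s \<in> hom C B' X0" using s p0 by blast
    have "comp C (comp C p0 s) v = comp C p0 f" using comp_assoc[OF v s(1) p0] s by simp
    also have "\<dots> = zer C M X0"
      unfolding f_def using comp_add_r[OF idm_hom neg_hom[OF e] p0] comp_negr[OF e p0] pe p0 by simp
    finally show "comp C (comp C p0 s) v = zer C M X0" .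
  qed
  have vs: "comp C v s = idm C B'"
  proof -
    let ?x = "add C (comp C v s) (neg C (idm C B'))"
    have vsh: "comp C v s \<in> hom C B' B'" using v s by blast
    have x: "?x \<in> hom C B' B'" using vsh by blast
    have ve: "comp C v e = zer C M B'"
      unfolding e_def using comp_assoc[OF p0 i0 v] vi0 comp_zl[OF p0, of B'] by simp
    have vf: "comp C v f = v"
      unfolding f_def using comp_add_r[OF idm_hom neg_hom[OF e] v] comp_negr[OF e v] ve v by simp
    have "comp C ?x v = add C (comp C (comp C v s) v) (comp C (neg C (idm C B')) v)"
      using comp_add_l[OF v vsh neg_hom[OF idm_hom]] .
    also have "comp C (comp C v s) v = v" using comp_assoc[OF v s(1) v] s vf by simp
    also have "comp C (neg C (idm C B')) v = neg C v" using comp_negl[OF v idm_hom] v by simp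
    finally have "comp C ?x v = zer C M B'" using v by simp
    hence "?x = zer C B' B'" using cancel[OF x] by blast
    thus ?thesis using sub_zero[OF vsh idm_hom] by blast
  qed
  define Xs' where "Xs' = (\<lambda>k::nat. if k = 0 then X0 else B')"
  define \<iota>' where "\<iota>' = (\<lambda>k::nat. if k = 0 then i0 else s)"
  define \<pi>' where "\<pi>' = (\<lambda>k::nat. if k = 0 then p0 else v)"
  have k2: "\<And>k::nat. k < 2 \<Longrightarrow> k = 0 \<or> k = 1" by auto
  have upt2: "[0..<2] = [0::nat, 1]" by (simp add: numeral_2_eq_2)
  have sum: "add C e (add C f (zer C M M)) = idm C M"
  proof -
    have "add C e (add C f (zer C M M)) = add C e (add C (neg C e) (idm C M))"
      unfolding f_def using f[unfolded f_def] add_comm[OF idm_hom neg_hom[OF e]] by simp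
    also have "\<dots> = add C (add C e (neg C e)) (idm C M)" using add_assoc[OF e neg_hom[OF e] idm_hom] by simp
    finally show ?thesis using e by simp
  qed
  have BP: "is_biprod C 2 Xs' M \<iota>' \<pi>'"
    unfolding is_biprod_def
  proof (intro conjI allI impI)
    fix k :: nat assume "k < 2"
    then show "\<iota>' k \<in> hom C (Xs' k) M" "\<pi>' k \<in> hom C M (Xs' k)"
      using k2 i0 p0 s v unfolding Xs'_def \<iota>'_def \<pi>'_def by auto
  next
    fix k l :: nat assume "k < 2" "l < 2"
    then show "comp C (\<pi>' k) (\<iota>' l) = (if k = l then idm C (Xs' k) else zer C (Xs' l) (Xs' k))"
      using k2 pi ps vi0 vs unfolding Xs'_def \<iota>'_def \<pi>'_def by (cases "k = 0"; cases "l = 0") auto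
  next
    show "msum C M M (map (\<lambda>k. comp C (\<iota>' k) (\<pi>' k)) [0..<2]) = idm C M"
      unfolding upt2 \<iota>'_def \<pi>'_def using sum s(2) unfolding e_def by simp
  qed
  hence "is_zero_obj C X0 \<or> is_zero_obj C B'"
    using ind unfolding indecomposable_def Xs'_def by blast
  moreover have "\<not> is_zero_obj C X0" using LX unfolding local_end_def by blast
  ultimately have ZB: "is_zero_obj C B'" by blast
  have "s = zer C B' M" using zero_homL[OF ZB s(1)] .
  hence "f = zer C M M" using s(2) comp_zl[OF v, of M] by simp
  hence "add C (idm C M) (neg C e) = zer C M M" unfolding f_def .
  hence "idm C M = e" by (rule sub_zero[OF idm_hom e])
  hence "comp C i0 p0 = idm C M" unfolding e_def by simp
  thus ?thesis using LX p0 i0 pi by blast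
qed

lemma part_a: assumes P: "proj_system C t \<Theta> Q le \<beta>" and i: "i \<in> {1..t}"
  shows "is_cover C (P_class C t \<Theta>) (Q i) (\<Theta> i) (\<beta> i)"
proof -
  have nzT: "\<not> is_zero_obj C (\<Theta> i)" using P i unfolding proj_system_def by blast
  have ind: "indecomposable C (Q i)" using P i unfolding proj_system_def by blast
  obtain QQ \<iota> \<pi> where BP: "is_biprod C t (\<lambda>k. Q (Suc k)) QQ \<iota> \<pi>"
      and hz: "\<forall>j\<in>{1..t}. hom_zero C QQ (shO C (\<Theta> j))"
    using P unfolding proj_system_def by blast
  obtain K a c where T: "(K, Q i, \<Theta> i, a, \<beta> i, c) \<in> tri C"
      and Kf: "K \<in> filt C (\<Theta> ` {j\<in>{1..t}. (i,j) \<in> le \<and> j \<noteq> i})"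
      and hK: "hom_zero C (shO C K) (\<Theta> i)"
    using P i unfolding proj_system_def by blast
  have Kf': "K \<in> filt C (\<Theta> ` {1..t})" using Kf filt_mono[of "\<Theta> ` {j\<in>{1..t}. (i,j) \<in> le \<and> j \<noteq> i}" "\<Theta> ` {1..t}"] by blast
  have bh: "\<beta> i \<in> hom C (Q i) (\<Theta> i)" and ch: "c \<in> hom C (\<Theta> i) (shO C K)" using tri_homs[OF T] by auto
  have QP: "Q i \<in> P_class C t \<Theta>"
    unfolding P_class_def
  proof (rule CollectI, rule ballI)
    fix L assume L: "L \<in> filt C (\<Theta> ` {1..t})"
    have "\<forall>X\<in>\<Theta> ` {1..t}. hom_zero C (Q i) (shO C X)"
      using biprod_summand_hz[OF BP i] hz by blast
    thus "hom_zero C (Q i) (shO C L)" using filt_homzero L by blast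
  qed
  have T': "(Q i, \<Theta> i, shO C K, \<beta> i, c, neg C (shM C a)) \<in> tri C" using tri_rot[OF T] .
  have fac: "\<exists>h\<in>hom C X' (Q i). comp C (\<beta> i) h = g" if X': "X' \<in> P_class C t \<Theta>" and g: "g \<in> hom C X' (\<Theta> i)" for X' g
  proof -
    have "hom_zero C X' (shO C K)" using X' Kf' unfolding P_class_def by blast
    hence "comp C c g = zer C X' (shO C K)" using hom_zeroD g ch by blast
    thus ?thesis using exact_cov[OF T' g] by blast
  qed
  have minim: "is_iso C (Q i) (Q i) g" if g: "g \<in> hom C (Q i) (Q i)" and bg: "comp C (\<beta> i) g = \<beta> i" for g
  proof (rule ccontr)
    assume ng: "\<not> is_iso C (Q i) (Q i) g"
    obtain X0 \<phi> \<psi> where L: "local_end C X0" "\<phi> \<in> hom C (Q i) X0" "\<psi> \<in> hom C X0 (Q i)"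
      "comp C \<phi> \<psi> = idm C X0" "comp C \<psi> \<phi> = idm C (Q i)" using indec_local[OF ind] by blast
    let ?e = "add C (idm C (Q i)) (neg C g)"
    have ie: "is_iso C (Q i) (Q i) ?e" using local_transfer[OF L g ng] .
    then obtain k where k: "k \<in> hom C (Q i) (Q i)" "comp C ?e k = idm C (Q i)"
      unfolding is_iso_def by blast
    have eh: "?e \<in> hom C (Q i) (Q i)" using g by blast
    have be: "comp C (\<beta> i) ?e = zer C (Q i) (\<Theta> i)"
      using comp_add_r[OF idm_hom neg_hom[OF g] bh] comp_negr[OF g bh] bg bh by simp
    have "\<beta> i = comp C (\<beta> i) (comp C ?e k)" using k bh by simp
    also have "\<dots> = comp C (comp C (\<beta> i) ?e) k" using comp_assoc[OF k(1) eh bh] .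
    finally have b0: "\<beta> i = zer C (Q i) (\<Theta> i)" using be comp_zl[OF k(1), of "\<Theta> i"] by simp
    have "comp C (idm C (\<Theta> i)) (\<beta> i) = zer C (Q i) (\<Theta> i)" using b0 comp_idl[OF bh] by simp
    then obtain h where h: "h \<in> hom C (shO C K) (\<Theta> i)" "comp C h c = idm C (\<Theta> i)"
      using exact_contra[OF T' idm_hom] by blast
    have "h = zer C (shO C K) (\<Theta> i)" using hom_zeroD[OF hK h(1)] .
    hence "idm C (\<Theta> i) = zer C (\<Theta> i) (\<Theta> i)" using h(2) comp_zl[OF ch, of "\<Theta> i"] by simp
    thus False using idm_zero nzT by blast
  qed
  show ?thesis unfolding is_cover_def using QP bh fac minim by blast
qed

lemma cover_unique: assumes c1: "is_cover C PP X Y f" and c2: "is_cover C PP X' Y f'"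
  shows "\<exists>\<rho>. is_iso C X X' \<rho> \<and> comp C f' \<rho> = f"
proof -
  have X: "X \<in> PP" "f \<in> hom C X Y" and X': "X' \<in> PP" "f' \<in> hom C X' Y"
    using c1 c2 unfolding is_cover_def by auto
  obtain h where h: "h \<in> hom C X X'" "comp C f' h = f" using c2 X unfolding is_cover_def by blast
  obtain h' where h': "h' \<in> hom C X' X" "comp C f h' = f'" using c1 X' unfolding is_cover_def by blast
  have hh: "comp C h' h \<in> hom C X X" using h h' by blast
  have "comp C f (comp C h' h) = f" using comp_assoc[OF h(1) h'(1) X(2)] h h' by simp
  hence i1: "is_iso C X X (comp C h' h)" using c1 hh unfolding is_cover_def by blast
  have hh': "comp C h h' \<in> hom C X' X'" using h h' by blast
  have "comp C f' (comp C h h') = f'" using comp_assoc[OF h'(1) h(1) X'(2)] h h' by simp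
  hence i2: "is_iso C X' X' (comp C h h')" using c2 hh' unfolding is_cover_def by blast
  obtain a where a: "a \<in> hom C X X" "comp C a (comp C h' h) = idm C X" using i1 unfolding is_iso_def by blast
  obtain b where b: "b \<in> hom C X' X'" "comp C (comp C h h') b = idm C X'" using i2 unfolding is_iso_def by blast
  have ah: "comp C a h' \<in> hom C X' X" using a h' by blast
  have hb: "comp C h' b \<in> hom C X' X" using b h' by blast
  have l: "comp C (comp C a h') h = idm C X" using comp_assoc[OF h(1) h'(1) a(1)] a by simp
  have r: "comp C h (comp C h' b) = idm C X'" using comp_assoc[OF b(1) h'(1) h(1)] b by simp
  have "comp C a h' = comp C (comp C a h') (comp C h (comp C h' b))" using r ah by simp
  also have "\<dots> = comp C (comp C (comp C a h') h) (comp C h' b)" using comp_assoc[OF hb h(1) ah] .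
  also have "\<dots> = comp C h' b" using l hb by simp
  finally have "comp C h (comp C a h') = idm C X'" using r by simp
  hence "is_iso C X X' h" unfolding is_iso_def using h(1) ah l by blast
  thus ?thesis using h by blast
qed

end

theorem proposition5p6:
  fixes C :: "('o, 'm, 'r::comm_ring_1) tricat"
    and t :: nat and \<Theta> Q :: "nat \<Rightarrow> 'o" and le :: "(nat \<times> nat) set" and \<beta> :: "nat \<Rightarrow> 'm"
  assumes "artin_triangulated_category C"
    and "proj_system C t \<Theta> Q le \<beta>"
  shows "(\<forall>i\<in>{1..t}. is_cover C (P_class C t \<Theta>) (Q i) (\<Theta> i) (\<beta> i)) \<and>
         (\<forall>Q' \<beta>'. proj_system C t \<Theta> Q' le \<beta>' \<longrightarrow>
            (\<forall>i\<in>{1..t}. \<exists>\<rho>. is_iso C (Q i) (Q' i) \<rho> \<and> comp C (\<beta>' i) \<rho> = \<beta> i))"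
proof -
  interpret atc C using assms(1) by unfold_locales
  show ?thesis using part_a[OF assms(2)] part_a cover_unique by blast
qed

end
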